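(* Let $a,c,d\in\mathbb{Q}$ with $a,c,d\neq 0$, let $f(t)=t^4+ct+d$, and for $t\in\mathbb{Q}$ with $f(t)\ne0$ let $E^{f(t)}$ be the elliptic curve $f(t)y^2=x^3+ax$ over $\mathbb{Q}$. Then infinitely many fibres $E^{f(t)}$, $t\in\mathbb{Q}$, have positive rank. More precisely, there is a set $W\subset\mathbb{Q}$, which is dense in the half-interval $(-d/c,\infty)$ if $ac>0$, respectively dense in $(-\infty,-d/c)$ if $ac<0$, such that $E^{f(t)}$ has positive Mordell–Weil rank over $\mathbb{Q}$ for all $t\in W$. *)

theory Defs
  imports Complex_Main
begin

text \<open>Points of a curve  k y^2 = x^3 + A x + B  over a field (projective closure:
  affine points plus the point at infinity, which is the neutral element).\<close>

datatype 'a ecpt = Infty | Pt 'a 'a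

definition on_curve :: "'a::field \<Rightarrow> 'a \<Rightarrow> 'a \<Rightarrow> 'a ecpt \<Rightarrow> bool" where
  "on_curve k A B P = (case P of Infty \<Rightarrow> True
      | Pt x y \<Rightarrow> k * y^2 = x^3 + A * x + B)"

fun ec_add :: "'a::field \<Rightarrow> 'a \<Rightarrow> 'a \<Rightarrow> 'a ecpt \<Rightarrow> 'a ecpt \<Rightarrow> 'a ecpt" where
  "ec_add k A B Infty Q = Q"
| "ec_add k A B P Infty = P"
| "ec_add k A B (Pt x1 y1) (Pt x2 y2) =
     (if x1 = x2 then
        (if y1 = - y2 then Infty
         else (let l = (3 * x1^2 + A) / (2 * k * y1);
                   x3 = k * l^2 - 2 * x1
               in Pt x3 (l * (x1 - x3) - y1)))
      else (let l = (y2 - y1) / (x2 - x1);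
                x3 = k * l^2 - x1 - x2
            in Pt x3 (l * (x1 - x3) - y1)))"

fun ec_mult :: "'a::field \<Rightarrow> 'a \<Rightarrow> 'a \<Rightarrow> nat \<Rightarrow> 'a ecpt \<Rightarrow> 'a ecpt" where
  "ec_mult k A B 0 P = Infty"
| "ec_mult k A B (Suc n) P = ec_add k A B P (ec_mult k A B n P)"

text \<open>The curve  k y^2 = x^3 + A x + B  over \<open>\<rat>\<close> has positive Mordell-Weil rank
  iff its (finitely generated) group of rational points contains a point of
  infinite order.\<close>

definition positive_rank :: "rat \<Rightarrow> rat \<Rightarrow> rat \<Rightarrow> bool" where
  "positive_rank k A B =
     (\<exists>P. on_curve k A B P \<and> (\<forall>n::nat. n > 0 \<longrightarrow> ec_mult k A B n P \<noteq> Infty))"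

end

theory Submission
  imports Defs "HOL-Computational_Algebra.Computational_Algebra"
begin

definition v2 :: "rat \<Rightarrow> int" where
  "v2 r = (case quotient_of r of (n, d) \<Rightarrow> int (multiplicity (2::int) n) - int (multiplicity (2::int) d))"

lemma prime2: "prime_elem (2::int)" by simp

lemma mult2_mult: "x \<noteq> 0 \<Longrightarrow> y \<noteq> 0 \<Longrightarrow> multiplicity (2::int) (x*y) = multiplicity 2 x + multiplicity 2 y"
  by (rule prime_elem_multiplicity_mult_distrib[OF prime2])

lemma v2_frac:
  assumes "n \<noteq> 0" "d \<noteq> 0"
  shows "v2 (of_int n / of_int d) = int (multiplicity 2 n) - int (multiplicity 2 d)"
proof -
  obtain n0 d0 where q: "quotient_of (of_int n / of_int d) = (n0, d0)" by fastforce
  have d0: "d0 > 0" using quotient_of_denom_pos[OF q] .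
  have eq: "(of_int n / of_int d :: rat) = of_int n0 / of_int d0" using quotient_of_div[OF q] .
  hence "(of_int (n * d0) :: rat) = of_int (n0 * d)" using assms d0 by (simp add: field_simps)
  hence e: "n * d0 = n0 * d" by (simp only: of_int_eq_iff)
  have n0: "n0 \<noteq> 0" using e assms d0 by auto
  have "multiplicity 2 (n*d0) = multiplicity 2 (n0*d)" using e by simp
  hence "multiplicity 2 n + multiplicity (2::int) d0 = multiplicity 2 n0 + multiplicity 2 d"
    using assms d0 n0 by (simp add: mult2_mult)
  thus ?thesis unfolding v2_def q by simp
qed

lemma rat_rep: "\<exists>n d. d \<noteq> 0 \<and> (x::rat) = of_int n / of_int d"
proof -
  obtain n d where q: "quotient_of x = (n, d)" by fastforce
  thus ?thesis using quotient_of_div[OF q] quotient_of_denom_pos[OF q] by (intro exI[of _ n] exI[of _ d]) auto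
qed

lemma rat_rep_nz: "x \<noteq> 0 \<Longrightarrow> \<exists>n d. n \<noteq> 0 \<and> d \<noteq> 0 \<and> (x::rat) = of_int n / of_int d"
  using rat_rep[of x] by fastforce

lemma v2_zero[simp]: "v2 0 = 0" by (simp add: v2_def)

lemma v2_mult: assumes "x \<noteq> 0" "y \<noteq> 0" shows "v2 (x*y) = v2 x + v2 y"
proof -
  obtain n1 d1 where 1: "n1 \<noteq> 0" "d1 \<noteq> 0" "x = of_int n1 / of_int d1" using rat_rep_nz[OF assms(1)] by blast
  obtain n2 d2 where 2: "n2 \<noteq> 0" "d2 \<noteq> 0" "y = of_int n2 / of_int d2" using rat_rep_nz[OF assms(2)] by blast
  have e: "x*y = of_int (n1*n2) / of_int (d1*d2)" using 1 2 by simp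
  have "v2 (x*y) = int (multiplicity 2 (n1*n2)) - int (multiplicity 2 (d1*d2))"
    unfolding e by (rule v2_frac) (use 1 2 in auto)
  thus ?thesis using 1 2 by (simp add: v2_frac mult2_mult)
qed

lemma v2_one[simp]: "v2 1 = 0"
  using v2_frac[of 1 1] by simp

lemma v2_inverse: "v2 (inverse x) = - v2 x"
proof (cases "x = 0")
  case False
  have "v2 (x * inverse x) = v2 x + v2 (inverse x)" using False by (intro v2_mult) auto
  thus ?thesis using False by simp
qed simp

lemma v2_divide: assumes "x \<noteq> 0" "y \<noteq> 0" shows "v2 (x/y) = v2 x - v2 y"
  using assms by (simp add: divide_inverse v2_mult v2_inverse)

lemma v2_uminus[simp]: "v2 (-x) = v2 x"
proof -
  obtain n d where 1: "d \<noteq> 0" "x = of_int n / of_int d" using rat_rep by blast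
  show ?thesis
  proof (cases "n = 0")
    case True thus ?thesis using 1 by simp
  next
    case False
    have e: "-x = of_int (-n) / of_int d" using 1 by simp
    have "v2 (-x) = int (multiplicity 2 (-n)) - int (multiplicity 2 d)"
      unfolding e by (rule v2_frac) (use 1 False in auto)
    thus ?thesis using 1 False by (simp add: v2_frac)
  qed
qed

lemma v2_power: "v2 (x^n) = int n * v2 x"
proof (cases "x = 0")
  case True thus ?thesis by (cases n) auto
next
  case False thus ?thesis by (induction n) (auto simp: v2_mult algebra_simps)
qed

lemma v2_of_int: "v2 (of_int n) \<ge> 0"
  using v2_frac[of n 1] by (cases "n = 0") auto

lemma v2_two[simp]: "v2 2 = 1"
  using v2_frac[of 2 1] by simp

definition vge :: "rat \<Rightarrow> int \<Rightarrow> bool" where "vge x n \<longleftrightarrow> x = 0 \<or> n \<le> v2 x"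

lemma vge_add: assumes "vge x m" "vge y m" shows "vge (x + y) m"
proof -
  { assume x: "x \<noteq> 0" and y: "y \<noteq> 0" and s: "x + y \<noteq> 0"
    obtain n1 d1 where 1: "n1 \<noteq> 0" "d1 \<noteq> 0" "x = of_int n1 / of_int d1" using rat_rep_nz[OF x] by blast
    obtain n2 d2 where 2: "n2 \<noteq> 0" "d2 \<noteq> 0" "y = of_int n2 / of_int d2" using rat_rep_nz[OF y] by blast
    have xy: "x + y = of_int (n1*d2 + n2*d1) / of_int (d1*d2)" using 1 2 by (simp add: field_simps)
    have nz: "n1*d2 + n2*d1 \<noteq> 0"
    proof
      assume "n1*d2 + n2*d1 = 0"
      hence "x + y = of_int 0 / of_int (d1*d2)" unfolding xy by metis
      thus False using s by simp
    qed
    have vx: "m \<le> int (multiplicity 2 n1) - int (multiplicity 2 d1)" using assms(1) x 1 by (simp add: vge_def v2_frac)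
    have vy: "m \<le> int (multiplicity 2 n2) - int (multiplicity 2 d2)" using assms(2) y 2 by (simp add: vge_def v2_frac)
    define K where "K = m + int (multiplicity 2 d1) + int (multiplicity 2 d2)"
    have "int (multiplicity 2 (n1*d2 + n2*d1)) \<ge> K"
    proof (cases "K \<le> 0")
      case True thus ?thesis by simp
    next
      case False
      have a: "(2::int) ^ nat K dvd n1*d2"
        apply (rule multiplicity_dvd') using vx 1 2 by (simp add: mult2_mult K_def)
      have b: "(2::int) ^ nat K dvd n2*d1"
        apply (rule multiplicity_dvd') using vy 1 2 by (simp add: mult2_mult K_def)
      have "(2::int) ^ nat K dvd n1*d2 + n2*d1" using a b by simp
      hence "nat K \<le> multiplicity 2 (n1*d2 + n2*d1)"
        using multiplicity_geI[of "n1*d2 + n2*d1" "2::int" "nat K"] nz by auto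
      thus ?thesis using False by simp
    qed
    moreover have "v2 (x + y) = int (multiplicity 2 (n1*d2 + n2*d1)) - int (multiplicity 2 (d1*d2))"
      unfolding xy by (rule v2_frac) (use nz 1 2 in auto)
    ultimately have "m \<le> v2 (x + y)" using 1 2 by (simp add: mult2_mult K_def)
  } note * = this
  show ?thesis
  proof (cases "x = 0 \<or> y = 0 \<or> x + y = 0")
    case True thus ?thesis using assms by (auto simp: vge_def)
  next
    case False thus ?thesis using * by (auto simp: vge_def)
  qed
qed

lemma vge_mult: assumes "vge x m" "vge y n" shows "vge (x * y) (m + n)"
  using assms by (cases "x = 0"; cases "y = 0") (auto simp: vge_def v2_mult)

lemma vge_mono: "vge x n \<Longrightarrow> m \<le> n \<Longrightarrow> vge x m"
  by (auto simp: vge_def)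

lemma vge_uminus: "vge (-x) n = vge x n"
  by (auto simp: vge_def)

lemma vge_diff: "vge x m \<Longrightarrow> vge y m \<Longrightarrow> vge (x - y) m"
  using vge_add[of x m "-y"] by (simp add: vge_uminus)

lemma vge_exact: "x \<noteq> 0 \<Longrightarrow> vge x (v2 x)" by (simp add: vge_def)

lemma vge_of_int: "vge (of_int n) 0" using v2_of_int by (simp add: vge_def)

lemma vge_zero[simp]: "vge 0 n" by (simp add: vge_def)

lemma v2_strict:
  assumes "x \<noteq> 0" "vge y (v2 x + 1)"
  shows "x + y \<noteq> 0 \<and> v2 (x + y) = v2 x"
proof -
  have s: "vge (x + y) (v2 x)" using vge_add[OF vge_exact[OF assms(1)] vge_mono[OF assms(2)]] by simp
  have ne: "x + y \<noteq> 0"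
  proof
    assume "x + y = 0" hence "y = -x" by simp
    hence "vge x (v2 x + 1)" using assms(2) by (simp add: vge_uminus)
    thus False using assms(1) by (simp add: vge_def)
  qed
  have "\<not> v2 x + 1 \<le> v2 (x + y)"
  proof
    assume "v2 x + 1 \<le> v2 (x + y)"
    hence "vge ((x + y) - y) (v2 x + 1)" using assms(2) ne by (intro vge_diff) (auto simp: vge_def)
    thus False using assms(1) by (simp add: vge_def)
  qed
  thus ?thesis using s ne by (auto simp: vge_def)
qed

lemma unit_1: assumes "vge z 1" shows "1 + z \<noteq> 0 \<and> v2 (1 + z) = 0"
  using v2_strict[of 1 z] assms by simp

fun opp :: "rat ecpt \<Rightarrow> rat ecpt" where
  "opp Infty = Infty" | "opp (Pt x y) = Pt x (-y)"

abbreviation "oc A P \<equiv> on_curve (1::rat) A 0 P"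
abbreviation "add A \<equiv> ec_add (1::rat) A 0"

lemma oc_Pt: "oc A (Pt x y) \<longleftrightarrow> y^2 = x^3 + A*x" by (simp add: on_curve_def)

lemma sq_eq_cases: "(y1::rat)^2 = y2^2 \<Longrightarrow> y1 = y2 \<or> y1 = -y2"
  by (metis power2_eq_iff)

lemma add_Pt: "add A (Pt x1 y1) (Pt x2 y2) =
     (if x1 = x2 then
        (if y1 = - y2 then Infty
         else (let l = (3 * x1^2 + A) / (2 * y1); x3 = l^2 - 2 * x1 in Pt x3 (l * (x1 - x3) - y1)))
      else (let l = (y2 - y1) / (x2 - x1); x3 = l^2 - x1 - x2 in Pt x3 (l * (x1 - x3) - y1)))"
  by simp

lemma opp_on: "oc A P \<Longrightarrow> oc A (opp P)"
  by (cases P) (auto simp: on_curve_def)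

lemma add_on:
  assumes "oc A P" "oc A Q" shows "oc A (add A P Q)"
proof (cases P)
  case Infty thus ?thesis using assms by simp
next
  case (Pt x1 y1)
  show ?thesis
  proof (cases Q)
    case Infty thus ?thesis using assms Pt by simp
  next
    case Pt2: (Pt x2 y2)
    have c1: "y1^2 = x1^3 + A*x1" and c2: "y2^2 = x2^3 + A*x2" using assms Pt Pt2 by (auto simp: on_curve_def)
    show ?thesis
    proof (cases "x1 = x2")
      case True
      show ?thesis
      proof (cases "y1 = -y2")
        case True2: True
        thus ?thesis using Pt Pt2 True by (simp add: on_curve_def)
      next
        case False
        have "y2 = y1" using c1 c2 True False sq_eq_cases[of y1 y2] by auto
        hence y0: "y1 \<noteq> 0" using False by auto
        define l where "l = (3 * x1^2 + A) / (2 * y1)"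
        have hl: "l*(2*y1) = 3*x1^2 + A" using y0 by (simp add: l_def)
        have "(l*(x1 - (l^2 - 2*x1)) - y1)^2 = (l^2 - 2*x1)^3 + A*(l^2 - 2*x1)"
          using c1 hl by algebra
        thus ?thesis using Pt Pt2 True False by (simp add: on_curve_def Let_def l_def)
      qed
    next
      case False
      define l where "l = (y2 - y1) / (x2 - x1)"
      have hl: "l*(x2-x1) = y2-y1" using False by (simp add: l_def)
      have "(l*(x1 - (l^2 - x1 - x2)) - y1)^2 = (l^2 - x1 - x2)^3 + A*(l^2 - x1 - x2)"
        using c1 c2 hl False by algebra
      thus ?thesis using Pt Pt2 False by (simp add: on_curve_def Let_def l_def)
    qed
  qed
qed

lemma add_comm:
  assumes "oc A P" "oc A Q" shows "add A P Q = add A Q P"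
proof (cases P)
  case Infty thus ?thesis by (cases Q) auto
next
  case (Pt x1 y1)
  show ?thesis
  proof (cases Q)
    case Infty thus ?thesis using Pt by simp
  next
    case Pt2: (Pt x2 y2)
    have c1: "y1^2 = x1^3 + A*x1" and c2: "y2^2 = x2^3 + A*x2" using assms Pt Pt2 by (auto simp: on_curve_def)
    show ?thesis
    proof (cases "x1 = x2")
      case True
      hence "y2 = y1 \<or> y2 = -y1" using c1 c2 sq_eq_cases[of y2 y1] by auto
      thus ?thesis using Pt Pt2 True by auto
    next
      case False
      define l where "l = (y2 - y1) / (x2 - x1)"
      have hl: "l*(x2-x1) = y2-y1" using False by (simp add: l_def)
      have e1: "(y1 - y2) / (x1 - x2) = l" using False
        by (simp add: field_simps l_def)
      have q1: "add A P Q = Pt (l^2 - x1 - x2) (l*(x1 - (l^2 - x1 - x2)) - y1)"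
        using Pt Pt2 False by (simp add: Let_def l_def)
      have q2: "add A Q P = Pt (l^2 - x2 - x1) (l*(x2 - (l^2 - x2 - x1)) - y2)"
        using Pt Pt2 False by (simp add: Let_def e1)
      have "l*(x1 - (l^2 - x1 - x2)) - y1 = l*(x2 - (l^2 - x2 - x1)) - y2" using hl by algebra
      thus ?thesis using q1 q2 by (simp add: algebra_simps)
    qed
  qed
qed

lemma opp_add: "add A (opp P) (opp Q) = opp (add A P Q)"
proof (cases P)
  case Infty thus ?thesis by (cases Q) auto
next
  case (Pt x1 y1)
  show ?thesis
  proof (cases Q)
    case Infty thus ?thesis using Pt by simp
  next
    case Pt2: (Pt x2 y2)
    show ?thesis
    proof (cases "x1 = x2")
      case True
      show ?thesis
      proof (cases "y1 = -y2")
        case True thus ?thesis using Pt Pt2 \<open>x1 = x2\<close> by simp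
      next
        case False
        have e: "(3 * x2\<^sup>2 + A) / (2 * - y1) = - ((3 * x2\<^sup>2 + A) / (2 * y1))" by simp
        show ?thesis using Pt Pt2 True False by (simp add: Let_def e algebra_simps)
      qed
    next
      case False
      have e: "(y1 - y2) / (x2 - x1) = - ((y2 - y1) / (x2 - x1))" by (simp add: minus_divide_left)
      show ?thesis using Pt Pt2 False by (simp add: Let_def e algebra_simps)
    qed
  qed
qed

lemma cancel_tan:
  fixes x1 y1 A :: rat
  assumes y0: "y1 \<noteq> 0"
  defines "l \<equiv> (3 * x1^2 + A) / (2 * y1)"
  defines "x3 \<equiv> l^2 - 2*x1"
  defines "y3 \<equiv> l*(x1 - x3) - y1"
  shows "add A (Pt x3 y3) (Pt x1 (-y1)) = Pt x1 y1"
proof (cases "x3 = x1")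
  case True
  have y3: "y3 = -y1" using True by (simp add: y3_def)
  have ne: "y3 \<noteq> - (- y1)" using y3 y0 by simp
  have l': "(3 * x1^2 + A) / (2 * y3) = - l" using True y3 by (simp add: l_def)
  have nf: "(y3 = - (- y1)) = False" using ne by simp
  have "add A (Pt x3 y3) (Pt x1 (-y1)) = Pt ((-l)^2 - 2*x1) ((-l)*(x1 - ((-l)^2 - 2*x1)) - y3)"
    by (simp only: add_Pt True l' nf Let_def if_True if_False refl)
  also have "\<dots> = Pt x1 y1" using True y3 by (simp add: x3_def)
  finally show ?thesis .
next
  case False
  have l': "(-y1 - y3) / (x1 - x3) = - l" using False by (simp add: y3_def field_simps)
  have "add A (Pt x3 y3) (Pt x1 (-y1)) = Pt ((-l)^2 - x3 - x1) ((-l)*(x3 - ((-l)^2 - x3 - x1)) - y3)"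
    using False by (simp only: add_Pt l' Let_def if_False)
  also have "\<dots> = Pt x1 y1" by (simp add: x3_def y3_def algebra_simps power2_eq_square)
  finally show ?thesis .
qed

lemma cancel_chord:
  fixes x1 y1 x2 y2 A :: rat
  assumes A: "A \<noteq> 0" and c1: "y1^2 = x1^3 + A*x1" and c2: "y2^2 = x2^3 + A*x2" and ne: "x1 \<noteq> x2"
  defines "l \<equiv> (y2 - y1) / (x2 - x1)"
  defines "x3 \<equiv> l^2 - x1 - x2"
  defines "y3 \<equiv> l*(x1 - x3) - y1"
  shows "add A (Pt x3 y3) (Pt x2 (-y2)) = Pt x1 y1"
proof -
  have hl: "l*(x2-x1) = y2-y1" using ne by (simp add: l_def)
  show ?thesis
  proof (cases "x3 = x2")
    case True
    have y3: "y3 = -y2" using True hl by (simp add: y3_def algebra_simps)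
    have ll: "l^2 = x1 + 2*x2" using True by (simp add: x3_def)
    have tan: "2*l*y2 = 3*x2^2 + A"
    proof -
      have "(y2 - y1)*(y2 + y1) = (x2 - x1)*(x2^2 + x1*x2 + x1^2 + A)" using c1 c2 by algebra
      hence "l*(x2-x1)*(y2 + y1) = (x2 - x1)*(x2^2 + x1*x2 + x1^2 + A)" using hl by simp
      hence a: "l*(y2 + y1) = x2^2 + x1*x2 + x1^2 + A" using ne by simp
      have "y1 = y2 - l*(x2 - x1)" using hl by simp
      with a ll show ?thesis by algebra
    qed
    have y2: "y2 \<noteq> 0"
    proof
      assume "y2 = 0"
      hence "3*x2^2 + A = 0" "x2^3 + A*x2 = 0" using tan c2 by auto
      hence "x2 * (-2*x2^2) = 0" by algebra
      hence "x2 = 0" by simp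
      thus False using \<open>3*x2^2 + A = 0\<close> A by simp
    qed
    have ne2: "y3 \<noteq> - (- y2)" using y3 y2 by simp
    have l': "(3 * x2^2 + A) / (2 * y3) = - l" using True y3 tan y2 by (simp add: field_simps)
    have nf: "(y3 = - (- y2)) = False" using ne2 by simp
    have "add A (Pt x3 y3) (Pt x2 (-y2)) = Pt ((-l)^2 - 2*x2) ((-l)*(x2 - ((-l)^2 - 2*x2)) - y3)"
      by (simp only: add_Pt True l' nf Let_def if_True if_False refl)
    also have "\<dots> = Pt x1 y1" using True y3 ll hl by (simp add: algebra_simps)
    finally show ?thesis .
  next
    case False
    have l': "(-y2 - y3) / (x2 - x3) = - l" using False hl by (simp add: y3_def field_simps)
    have "add A (Pt x3 y3) (Pt x2 (-y2)) = Pt ((-l)^2 - x3 - x2) ((-l)*(x3 - ((-l)^2 - x3 - x2)) - y3)"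
      using False by (simp only: add_Pt l' Let_def if_False)
    also have "\<dots> = Pt x1 y1" by (simp add: x3_def y3_def algebra_simps power2_eq_square)
    finally show ?thesis .
  qed
qed

lemma cancel:
  assumes A: "A \<noteq> 0" and P: "oc A P" and Q: "oc A Q"
  shows "add A (add A P Q) (opp Q) = P"
proof (cases P)
  case Infty thus ?thesis by (cases Q) auto
next
  case (Pt x1 y1)
  show ?thesis
  proof (cases Q)
    case Infty thus ?thesis using Pt by simp
  next
    case Pt2: (Pt x2 y2)
    have c1: "y1^2 = x1^3 + A*x1" and c2: "y2^2 = x2^3 + A*x2" using P Q Pt Pt2 by (auto simp: on_curve_def)
    show ?thesis
    proof (cases "x1 = x2")
      case True
      show ?thesis
      proof (cases "y1 = -y2")
        case True2: True
        thus ?thesis using Pt Pt2 True by simp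
      next
        case False
        have "y2 = y1" using c1 c2 True False sq_eq_cases[of y1 y2] by auto
        hence y0: "y1 \<noteq> 0" using False by auto
        have "add A P Q = add A (Pt x1 y1) (Pt x1 y1)" using Pt Pt2 True \<open>y2 = y1\<close> by simp
        thus ?thesis using cancel_tan[OF y0, of A] Pt Pt2 True \<open>y2 = y1\<close> y0 by (simp add: Let_def)
      qed
    next
      case False
      thus ?thesis using cancel_chord[OF A c1 c2 False] Pt Pt2 by (simp add: Let_def)
    qed
  qed
qed

lemma opp_cancel:
  assumes A: "A \<noteq> 0" and P: "oc A P" and R: "oc A R"
  shows "add A (opp P) (add A P R) = R"
proof -
  have "add A (opp P) (add A P R) = add A (add A P R) (opp P)"
    using add_comm[OF opp_on[OF P] add_on[OF P R]] .
  also have "\<dots> = add A (add A R P) (opp P)" using add_comm[OF P R] by simp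
  also have "\<dots> = R" using cancel[OF A R P] .
  finally show ?thesis .
qed

lemma vge_A: "2 * v2 X < v2 A \<Longrightarrow> X \<noteq> 0 \<Longrightarrow> vge (A / X^2) 1"
  by (cases "A = 0") (auto simp: vge_def v2_divide v2_power)

lemma Yval:
  assumes c: "Y^2 = X^3 + A*X" and X: "X \<noteq> 0" and h: "2 * v2 X < v2 A"
  shows "Y \<noteq> 0 \<and> 2 * v2 Y = 3 * v2 X"
proof -
  have u: "1 + A / X^2 \<noteq> 0 \<and> v2 (1 + A / X^2) = 0" using unit_1[OF vge_A[OF h X]] .
  have e: "Y^2 = X^3 * (1 + A / X^2)" using c X by (simp add: field_simps power2_eq_square power3_eq_cube)
  have Y: "Y \<noteq> 0" using e u X by auto
  have "v2 (Y^2) = v2 (X^3) + v2 (1 + A / X^2)" using e u X by (simp add: v2_mult)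
  thus ?thesis using Y u by (simp add: v2_power)
qed

lemma v2_four: "v2 4 = 2"
proof -
  have "v2 (2*2) = v2 2 + v2 2" by (rule v2_mult) auto
  thus ?thesis by simp
qed

lemma dbl_val:
  assumes c: "Y^2 = X^3 + A*X" and X: "X \<noteq> 0" and h: "2 * v2 X < v2 A"
  defines "l \<equiv> (3 * X^2 + A) / (2 * Y)"
  shows "l^2 - 2*X \<noteq> 0 \<and> v2 (l^2 - 2*X) = v2 X - 2"
proof -
  have Y: "Y \<noteq> 0" using Yval[OF c X h] by simp
  have u1: "1 + A / X^2 \<noteq> 0 \<and> v2 (1 + A / X^2) = 0" using unit_1[OF vge_A[OF h X]] .
  have u2: "1 + (- (A / X^2)) \<noteq> 0 \<and> v2 (1 + (- (A / X^2))) = 0"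
    by (rule unit_1) (simp add: vge_uminus vge_A[OF h X])
  have e1: "X^2 + A = X^2 * (1 + A / X^2)" using X by (simp add: field_simps)
  have e2: "X^2 - A = X^2 * (1 + (- (A / X^2)))" using X by (simp add: field_simps)
  have nz1: "X^2 + A \<noteq> 0" using e1 u1 X by simp
  have nz2: "X^2 - A \<noteq> 0" using e2 u2 X by simp
  have v1: "v2 (X^2 + A) = 2 * v2 X" using e1 u1 X by (simp add: v2_mult v2_power)
  have v2': "v2 (X^2 - A) = 2 * v2 X" using e2 u2 X by (simp add: v2_mult v2_power)
  have id: "l^2 - 2*X = (X^2 - A)^2 / (4 * (X * (X^2 + A)))"
  proof -
    have "l^2 - 2*X = ((3 * X^2 + A)^2 - 8*X*Y^2) / (4*Y^2)" using Y
      by (simp add: l_def field_simps power2_eq_square)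
    also have "\<dots> = (X^2 - A)^2 / (4 * (X * (X^2 + A)))"
    proof -
      have n: "(3 * X^2 + A)^2 - 8*X*Y^2 = (X^2 - A)^2" unfolding c by algebra
      have d: "4*Y^2 = 4 * (X * (X^2 + A))" unfolding c by algebra
      show ?thesis by (simp only: n d)
    qed
    finally show ?thesis .
  qed
  have nz: "(X^2 - A)^2 \<noteq> 0" "4 * (X * (X^2 + A)) \<noteq> 0" using nz1 nz2 X by auto
  have "v2 (l^2 - 2*X) = v2 ((X^2 - A)^2) - v2 (4 * (X * (X^2 + A)))"
    unfolding id by (rule v2_divide[OF nz])
  also have "\<dots> = v2 X - 2" using X nz1 v1 v2' by (simp add: v2_power v2_mult v2_four)
  finally show ?thesis using id nz by simp
qed

lemma chord_val:
  assumes c1: "Y1^2 = X1^3 + A*X1" and c2: "Y2^2 = X2^3 + A*X2"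
    and X1: "X1 \<noteq> 0" and X2: "X2 \<noteq> 0" and h: "2 * v2 X1 < v2 A" and h2: "v2 X2 \<le> v2 X1"
    and ne: "X1 \<noteq> X2"
  defines "l \<equiv> (Y2 - Y1) / (X2 - X1)"
  shows "l^2 - X1 - X2 \<noteq> 0 \<and> v2 (l^2 - X1 - X2) \<le> v2 X1"
proof -
  have h2': "2 * v2 X2 < v2 A" using h h2 by simp
  obtain Y1z: "Y1 \<noteq> 0" and q1: "2 * v2 Y1 = 3 * v2 X1" using Yval[OF c1 X1 h] by blast
  obtain Y2z: "Y2 \<noteq> 0" and q2: "2 * v2 Y2 = 3 * v2 X2" using Yval[OF c2 X2 h2'] by blast
  define e1 where "e1 = v2 X1 - v2 Y1"
  define e2 where "e2 = v2 X2 - v2 Y2"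
  have p1: "v2 X1 = -2*e1" and p2: "v2 X2 = -2*e2" using q1 q2 by (auto simp: e1_def e2_def)
  have e12: "e1 \<le> e2" using h2 p1 p2 by simp
  have hA: "vge A (1 - 4*e1)" using h p1 by (auto simp: vge_def)
  define t1 where "t1 = X1 / Y1"
  define t2 where "t2 = X2 / Y2"
  define s1 where "s1 = 1 / Y1"
  define s2 where "s2 = 1 / Y2"
  have vt1: "vge t1 e1" using X1 Y1z by (simp add: vge_def t1_def v2_divide e1_def)
  have vt2: "vge t2 e2" using X2 Y2z by (simp add: vge_def t2_def v2_divide e2_def)
  have vs1: "vge s1 (3*e1)" using Y1z q1 p1 by (simp add: vge_def s1_def v2_divide)
  have vs2: "vge s2 (3*e2)" using Y2z q2 p2 by (simp add: vge_def s2_def v2_divide)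
  have vt2': "vge t2 e1" using vge_mono[OF vt2 e12] .
  have vs2': "vge s2 (3*e1)" using vge_mono[OF vs2] e12 by simp
  have ts1: "s1 = t1^3 + A*t1*s1^2"
  proof -
    have "t1^3 + A*t1*s1^2 = (X1^3 + A*X1)/Y1^3" using Y1z
      by (simp add: t1_def s1_def field_simps power2_eq_square power3_eq_cube)
    also have "\<dots> = Y1^2/Y1^3" by (simp add: c1)
    also have "\<dots> = s1" using Y1z by (simp add: s1_def power2_eq_square power3_eq_cube)
    finally show ?thesis by simp
  qed
  have ts2: "s2 = t2^3 + A*t2*s2^2"
  proof -
    have "t2^3 + A*t2*s2^2 = (X2^3 + A*X2)/Y2^3" using Y2z
      by (simp add: t2_def s2_def field_simps power2_eq_square power3_eq_cube)
    also have "\<dots> = Y2^2/Y2^3" by (simp add: c2)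
    also have "\<dots> = s2" using Y2z by (simp add: s2_def power2_eq_square power3_eq_cube)
    finally show ?thesis by simp
  qed
  define U where "U = 1 - A*t1*(s1+s2)"
  define Nn where "Nn = t1^2 + t1*t2 + t2^2 + A*s2^2"
  have vz: "vge (-(A*t1*(s1+s2))) 1"
  proof -
    have "vge (A*t1*(s1+s2)) ((1 - 4*e1) + e1 + 3*e1)"
      by (intro vge_mult vge_add hA vt1 vs1 vs2')
    thus ?thesis by (simp add: vge_uminus)
  qed
  have U: "U \<noteq> 0 \<and> v2 U = 0" using unit_1[OF vz] by (simp add: U_def)
  have vN: "vge Nn (2*e1)"
  proof -
    have a: "vge (t1^2) (2*e1)" using vge_mult[OF vt1 vt1] by (simp add: power2_eq_square)
    have b: "vge (t1*t2) (2*e1)" using vge_mult[OF vt1 vt2'] by simp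
    have c: "vge (t2^2) (2*e1)" using vge_mult[OF vt2' vt2'] by (simp add: power2_eq_square)
    have d0: "vge (A*s2^2) ((1 - 4*e1) + (3*e1 + 3*e1))" using vge_mult[OF hA vge_mult[OF vs2' vs2']]
      by (simp add: power2_eq_square)
    have d: "vge (A*s2^2) (2*e1)" using vge_mono[OF d0] e12 by simp
    show ?thesis unfolding Nn_def by (intro vge_add a b c d)
  qed
  have I1: "(s2 - s1) * U = (t2 - t1) * Nn"
    unfolding U_def Nn_def using ts1 ts2 by algebra
  have Y12: "Y1 * Y2 \<noteq> 0" using Y1z Y2z by simp
  have tne: "t1 \<noteq> t2"
  proof
    assume "t1 = t2"
    hence "(s2 - s1) * U = 0" using I1 by simp
    hence "s1 = s2" using U by simp
    hence "Y1 = Y2" by (simp add: s1_def s2_def)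
    thus False using \<open>t1 = t2\<close> ne Y1z by (simp add: t1_def t2_def)
  qed
  define \<alpha> where "\<alpha> = Nn / U"
  have va: "vge \<alpha> (2*e1)"
  proof -
    have "vge (inverse U) 0" using U by (simp add: vge_def v2_inverse)
    from vge_mult[OF vN this] show ?thesis by (simp add: \<alpha>_def divide_inverse)
  qed
  have sa: "s2 - s1 = \<alpha> * (t2 - t1)" using I1 U by (simp add: \<alpha>_def field_simps)
  define \<beta> where "\<beta> = - (t1 * t2 * ((t1 + t2) + A*\<alpha>*(s1+s2)))"
  have vb: "vge \<beta> (e1 + e2 + e1)"
  proof -
    have a: "vge (t1 + t2) e1" by (intro vge_add vt1 vt2')
    have b0: "vge (A*\<alpha>*(s1+s2)) ((1 - 4*e1) + 2*e1 + 3*e1)"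
      by (intro vge_mult vge_add hA va vs1 vs2')
    have b: "vge (A*\<alpha>*(s1+s2)) e1" using vge_mono[OF b0] by simp
    have "vge (t1 * t2 * ((t1 + t2) + A*\<alpha>*(s1+s2))) (e1 + e2 + e1)"
      by (intro vge_mult vge_add vt1 vt2 a b)
    thus ?thesis by (simp add: \<beta>_def vge_uminus)
  qed
  have I2: "s1*t2 - s2*t1 = (t2 - t1) * \<beta>"
  proof -
    have "s1*t2 - s2*t1 = t1*t2*((t1^2 - t2^2) + A*(s1^2 - s2^2))"
      using ts1 ts2 by algebra
    thus ?thesis using sa unfolding \<beta>_def by algebra
  qed
  have I3: "s1*t2 - s2*t1 = (X2 - X1) / (Y1*Y2)" using Y1z Y2z
    by (simp add: s1_def s2_def t1_def t2_def field_simps)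
  have bnz: "\<beta> \<noteq> 0" using I2 I3 ne Y12 by auto
  have vb2: "v2 \<beta> \<ge> 2*e1 + e2" using vb bnz by (simp add: vge_def)
  define \<nu> where "\<nu> = Y1 - l*X1"
  have hl: "l*(X2-X1) = Y2-Y1" using ne by (simp add: l_def)
  have vieta: "X1*X2*(l^2 - X1 - X2) = \<nu>^2" unfolding \<nu>_def using c1 c2 hl ne by algebra
  have nb: "\<nu> * \<beta> = 1"
  proof -
    have tt: "t2 - t1 = (X2*Y1 - X1*Y2) / (Y1*Y2)" using Y1z Y2z
      by (simp add: t1_def t2_def field_simps)
    have tt0: "X2*Y1 - X1*Y2 \<noteq> 0" using tne tt by auto
    have "\<beta> = (X2 - X1) / (X2*Y1 - X1*Y2)" using I2 I3 tt tne Y12 tt0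
      by (simp add: field_simps)
    moreover have "\<nu> = (X2*Y1 - X1*Y2) / (X2 - X1)" using hl ne
      by (simp add: \<nu>_def l_def field_simps)
    ultimately show ?thesis using tt0 ne by simp
  qed
  have X3: "l^2 - X1 - X2 = 1 / (\<beta>^2 * (X1*X2))"
  proof -
    have nu: "\<nu> = 1 / \<beta>" using nb bnz by (simp add: field_simps)
    have "l^2 - X1 - X2 = \<nu>^2/(X1*X2)" using vieta X1 X2 by (simp add: eq_divide_eq mult.commute)
    also have "\<dots> = 1 / (\<beta>^2 * (X1*X2))" unfolding nu by (simp add: power_one_over)
    finally show ?thesis .
  qed
  have nz: "\<beta>^2 * (X1*X2) \<noteq> 0" using bnz X1 X2 by simp
  have "v2 (l^2 - X1 - X2) = - (2 * v2 \<beta> + (v2 X1 + v2 X2))"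
    unfolding X3 using bnz X1 X2 by (simp add: v2_inverse v2_mult v2_power divide_inverse)
  also have "\<dots> \<le> v2 X1" using vb2 p1 p2 by simp
  finally show ?thesis using X3 nz by simp
qed

lemma core:
  fixes A X0 Y0 :: rat
  assumes A: "A \<noteq> 0" and c0: "Y0^2 = X0^3 + A*X0" and X0: "X0 \<noteq> 0" and h: "2 * v2 X0 < v2 A"
  shows "\<forall>n>0. ec_mult 1 A 0 n (Pt X0 Y0) \<noteq> Infty"
proof (rule ccontr)
  define P where "P = Pt X0 Y0"
  define Q where "Q n = ec_mult 1 A 0 n P" for n
  define C where "C R \<longleftrightarrow> R = Infty \<or> (\<exists>X Y. R = Pt X Y \<and> Y^2 = X^3 + A*X \<and> X \<noteq> 0 \<and> v2 X \<le> v2 X0)" for R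
  have CP: "C P" using c0 X0 by (auto simp: C_def P_def)
  have ocP: "oc A P" using c0 by (simp add: P_def on_curve_def)
  have C_oc: "oc A R" if "C R" for R using that by (auto simp: C_def on_curve_def)
  have Y0z: "Y0 \<noteq> 0" using Yval[OF c0 X0 h] by simp
  have clos: "C (add A P R)" if CR: "C R" for R
  proof (cases R)
    case Infty thus ?thesis using CP by (simp add: P_def)
  next
    case (Pt X Y)
    have cR: "Y^2 = X^3 + A*X" and XR: "X \<noteq> 0" and vR: "v2 X \<le> v2 X0" using CR Pt by (auto simp: C_def)
    have ocS: "oc A (add A P R)" using add_on[OF ocP C_oc[OF CR]] .
    show ?thesis
    proof (cases "X0 = X")
      case True
      show ?thesis
      proof (cases "Y0 = -Y")
        case True2: True thus ?thesis using Pt True by (simp add: P_def C_def)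
      next
        case False
        have "Y = Y0" using c0 cR True False sq_eq_cases[of Y0 Y] by auto
        define l where "l = (3 * X0^2 + A) / (2 * Y0)"
        have S: "add A P R = Pt (l^2 - 2*X0) (l * (X0 - (l^2 - 2*X0)) - Y0)"
          using Pt True False by (simp add: P_def Let_def l_def)
        have d: "l^2 - 2*X0 \<noteq> 0 \<and> v2 (l^2 - 2*X0) = v2 X0 - 2" using dbl_val[OF c0 X0 h] by (simp add: l_def)
        show ?thesis using ocS d unfolding S by (auto simp: C_def on_curve_def)
      qed
    next
      case False
      define l where "l = (Y - Y0) / (X - X0)"
      have S: "add A P R = Pt (l^2 - X0 - X) (l * (X0 - (l^2 - X0 - X)) - Y0)"
        using Pt False by (simp add: P_def Let_def l_def)
      have d: "l^2 - X0 - X \<noteq> 0 \<and> v2 (l^2 - X0 - X) \<le> v2 X0"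
        using chord_val[OF c0 cR X0 XR h vR False] by (simp add: l_def)
      show ?thesis using ocS d unfolding S by (auto simp: C_def on_curve_def)
    qed
  qed
  have QS: "Q (Suc n) = add A P (Q n)" for n by (simp add: Q_def)
  have CQ: "C (Q n)" for n
  proof (induction n)
    case 0 thus ?case by (simp add: Q_def C_def)
  next
    case (Suc n) thus ?case using clos[OF Suc.IH] by (simp add: QS)
  qed
  assume "\<not> (\<forall>n>0. ec_mult 1 A 0 n (Pt X0 Y0) \<noteq> Infty)"
  hence ex: "\<exists>n. 0 < n \<and> Q n = Infty" by (auto simp: Q_def P_def)
  define N where "N = (LEAST n. 0 < n \<and> Q n = Infty)"
  have N: "0 < N" "Q N = Infty" using LeastI_ex[OF ex] by (auto simp: N_def)
  have Nmin: "Q j \<noteq> Infty" if "0 < j" "j < N" for j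
    using not_less_Least[of j "\<lambda>n. 0 < n \<and> Q n = Infty"] that by (auto simp: N_def)
  have neg: "opp (Q n) = Q (N - n)" if "n \<le> N" for n
    using that
  proof (induction n)
    case 0 thus ?case using N by (simp add: Q_def)
  next
    case (Suc n)
    have e: "N - n = Suc (N - Suc n)" using Suc.prems by simp
    have "opp (Q (Suc n)) = add A (opp P) (opp (Q n))" by (simp add: QS opp_add)
    also have "\<dots> = add A (opp P) (Q (N - n))" using Suc by simp
    also have "\<dots> = add A (opp P) (add A P (Q (N - Suc n)))" by (simp only: e QS)
    also have "\<dots> = Q (N - Suc n)" by (rule opp_cancel[OF A ocP C_oc[OF CQ]])
    finally show ?case .
  qed
  have ptQ: "\<exists>X Y. Q j = Pt X Y \<and> Y^2 = X^3 + A*X \<and> X \<noteq> 0 \<and> v2 X \<le> v2 X0 \<and> Y \<noteq> 0"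
    if jj: "0 < j" "j < N" for j
  proof -
    obtain X Y where "Q j = Pt X Y" "Y^2 = X^3 + A*X" "X \<noteq> 0" "v2 X \<le> v2 X0"
      using CQ[of j] Nmin[OF jj] by (auto simp: C_def)
    moreover have "Y \<noteq> 0" using Yval[OF \<open>Y^2 = X^3 + A*X\<close> \<open>X \<noteq> 0\<close>] h \<open>v2 X \<le> v2 X0\<close> by simp
    ultimately show ?thesis by blast
  qed
  show False
  proof (cases "even N")
    case True
    then obtain j where j: "N = 2*j" by blast
    have j0: "0 < j" "j < N" using j N by auto
    obtain X Y where XY: "Q j = Pt X Y" "Y \<noteq> 0" using ptQ[OF j0] by blast
    have "opp (Q j) = Q j" using neg[of j] j by simp
    thus False using XY by simp
  next
    case False
    then obtain j where j: "N = 2*j + 1" using oddE by blast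
    show False
    proof (cases "j = 0")
      case True
      hence "Q N = P" using j by (simp add: Q_def P_def)
      thus False using N by (simp add: P_def)
    next
      case False
      have j0: "0 < j" "j < N" using j False by auto
      obtain X Y where XY: "Q j = Pt X Y" "Y^2 = X^3 + A*X" "X \<noteq> 0" "v2 X \<le> v2 X0" "Y \<noteq> 0"
        using ptQ[OF j0] by blast
      have "opp (Q j) = Q (Suc j)" using neg[of j] j by simp
      hence e1: "opp (Q j) = add A P (Q j)" by (simp add: QS)
      have "P = add A (add A P (Q j)) (opp (Q j))" using cancel[OF A ocP C_oc[OF CQ]] by simp
      also have "\<dots> = add A (Pt X (-Y)) (Pt X (-Y))" using e1 XY by simp
      finally have PP: "P = add A (Pt X (-Y)) (Pt X (-Y))" .
      define l where "l = (3 * X^2 + A) / (2 * (-Y))"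
      have "add A (Pt X (-Y)) (Pt X (-Y)) = Pt (l^2 - 2*X) (l * (X - (l^2 - 2*X)) - (-Y))"
        using XY by (simp add: Let_def l_def)
      hence X0e: "X0 = l^2 - 2*X" using PP by (simp add: P_def)
      have cm: "(-Y)^2 = X^3 + A*X" using XY by simp
      have h2: "2 * v2 X < v2 A" using XY h by simp
      have "v2 (l^2 - 2*X) = v2 X - 2" using dbl_val[OF cm \<open>X \<noteq> 0\<close> h2] by (simp add: l_def)
      thus False using X0e XY by simp
    qed
  qed
qed

fun psi :: "rat \<Rightarrow> rat \<Rightarrow> rat ecpt \<Rightarrow> rat ecpt" where
  "psi \<alpha> \<beta> Infty = Infty" | "psi \<alpha> \<beta> (Pt x y) = Pt (\<alpha>*x) (\<beta>*y)"

lemma psi_add: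
  fixes k a \<alpha> \<beta> :: rat
  assumes a0: "\<alpha> \<noteq> 0" and b0: "\<beta> \<noteq> 0" and rel: "\<beta>^2 = k*\<alpha>^3"
  shows "psi \<alpha> \<beta> (ec_add k a 0 P Q) = ec_add 1 (a*\<alpha>^2) 0 (psi \<alpha> \<beta> P) (psi \<alpha> \<beta> Q)"
proof (cases P)
  case Infty thus ?thesis by (cases Q) auto
next
  case (Pt x1 y1)
  have k0: "k \<noteq> 0" using rel b0 by auto
  have kk: "(\<beta>/\<alpha>)^2 = k*\<alpha>" using rel a0 by (simp add: power_divide power3_eq_cube power2_eq_square field_simps)
  show ?thesis
  proof (cases Q)
    case Infty thus ?thesis using Pt by simp
  next
    case Pt2: (Pt x2 y2)
    show ?thesis
    proof (cases "x1 = x2")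
      case True
      show ?thesis
      proof (cases "y1 = -y2")
        case True thus ?thesis using Pt Pt2 \<open>x1 = x2\<close> by simp
      next
        case False
        have nf: "(\<beta>*y1 = - (\<beta>*y2)) = False" 
        proof -
          have "(\<beta>*y1 = - (\<beta>*y2)) = (\<beta>*(y1+y2) = 0)" by (auto simp: algebra_simps)
          moreover have "y1 + y2 \<noteq> 0" using False by (auto simp: add_eq_0_iff)
          ultimately show ?thesis using b0 by simp
        qed
        have tf: "(\<alpha>*x1 = \<alpha>*x2) = True" using \<open>x1 = x2\<close> by simp
        define l where "l = (3 * x1^2 + a) / (2 * k * y1)"
        have l': "(3 * (\<alpha>*x1)^2 + a*\<alpha>^2) / (2 * 1 * (\<beta>*y1)) = (\<beta>/\<alpha>) * l"
        proof (cases "y1 = 0")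
          case True thus ?thesis by (simp add: l_def)
        next
          case False
          have "(3 * (\<alpha>*x1)^2 + a*\<alpha>^2) / (2 * 1 * (\<beta>*y1)) = \<alpha>^2 * (3*x1^2 + a) / (2*\<beta>*y1)"
            by (simp add: algebra_simps power2_eq_square)
          also have "\<dots> = (\<beta>/\<alpha>) * l" using False a0 b0 k0 rel
            by (simp add: l_def field_simps power2_eq_square power3_eq_cube) algebra
          finally show ?thesis .
        qed
        have "ec_add 1 (a*\<alpha>^2) 0 (psi \<alpha> \<beta> P) (psi \<alpha> \<beta> Q) =
              Pt (((\<beta>/\<alpha>) * l)^2 - 2*(\<alpha>*x1)) (((\<beta>/\<alpha>) * l) * (\<alpha>*x1 - (((\<beta>/\<alpha>) * l)^2 - 2*(\<alpha>*x1))) - \<beta>*y1)"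
          using Pt Pt2 by (simp only: psi.simps ec_add.simps tf if_True if_False nf l' Let_def refl mult_1)
        also have "\<dots> = Pt (\<alpha>*(k*l^2 - 2*x1)) (\<beta>*(l*(x1 - (k*l^2 - 2*x1)) - y1))"
        proof -
          have kk': "((\<beta>/\<alpha>)*l)^2 = k*\<alpha>*l^2" by (simp only: power_mult_distrib kk)
          have e1: "((\<beta>/\<alpha>)*l)^2 - 2*(\<alpha>*x1) = \<alpha>*(k*l^2 - 2*x1)" unfolding kk' by (simp add: algebra_simps)
          have e2: "((\<beta>/\<alpha>)*l) * (\<alpha>*x1 - \<alpha>*(k*l^2 - 2*x1)) - \<beta>*y1 = \<beta>*(l*(x1 - (k*l^2 - 2*x1)) - y1)"
            using a0 by (simp add: field_simps)
          show ?thesis by (simp only: e1 e2)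
        qed
        also have "\<dots> = psi \<alpha> \<beta> (ec_add k a 0 P Q)"
          using Pt Pt2 True False by (simp add: Let_def l_def)
        finally show ?thesis by simp
      qed
    next
      case False
      have nf: "(\<alpha>*x1 = \<alpha>*x2) = False" using False a0 by simp
      define l where "l = (y2 - y1) / (x2 - x1)"
      have l': "(\<beta>*y2 - \<beta>*y1) / (\<alpha>*x2 - \<alpha>*x1) = (\<beta>/\<alpha>) * l" using False a0
        by (simp add: l_def field_simps)
      have "ec_add 1 (a*\<alpha>^2) 0 (psi \<alpha> \<beta> P) (psi \<alpha> \<beta> Q) =
              Pt (((\<beta>/\<alpha>) * l)^2 - \<alpha>*x1 - \<alpha>*x2) (((\<beta>/\<alpha>) * l) * (\<alpha>*x1 - (((\<beta>/\<alpha>) * l)^2 - \<alpha>*x1 - \<alpha>*x2)) - \<beta>*y1)"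
        using Pt Pt2 by (simp only: psi.simps ec_add.simps if_False nf l' Let_def mult_1)
      also have "\<dots> = Pt (\<alpha>*(k*l^2 - x1 - x2)) (\<beta>*(l*(x1 - (k*l^2 - x1 - x2)) - y1))"
      proof -
        have kk': "((\<beta>/\<alpha>)*l)^2 = k*\<alpha>*l^2" by (simp only: power_mult_distrib kk)
        have e1: "((\<beta>/\<alpha>)*l)^2 - \<alpha>*x1 - \<alpha>*x2 = \<alpha>*(k*l^2 - x1 - x2)" unfolding kk' by (simp add: algebra_simps)
        have e2: "((\<beta>/\<alpha>)*l) * (\<alpha>*x1 - \<alpha>*(k*l^2 - x1 - x2)) - \<beta>*y1 = \<beta>*(l*(x1 - (k*l^2 - x1 - x2)) - y1)"
          using a0 by (simp add: field_simps)
        show ?thesis by (simp only: e1 e2)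
      qed
      also have "\<dots> = psi \<alpha> \<beta> (ec_add k a 0 P Q)"
        using Pt Pt2 False by (simp add: Let_def l_def)
      finally show ?thesis by simp
    qed
  qed
qed

lemma psi_mult:
  fixes k a \<alpha> \<beta> :: rat
  assumes a0: "\<alpha> \<noteq> 0" and b0: "\<beta> \<noteq> 0" and rel: "\<beta>^2 = k*\<alpha>^3"
  shows "psi \<alpha> \<beta> (ec_mult k a 0 n P) = ec_mult 1 (a*\<alpha>^2) 0 n (psi \<alpha> \<beta> P)"
  by (induction n) (simp_all add: psi_add[OF a0 b0 rel])

lemma dense_r:
  fixes L R :: rat and \<sigma> :: nat
  assumes L: "0 < L" and LR: "L < R"
  shows "\<exists>r. r \<noteq> 0 \<and> int \<sigma> \<le> v2 r \<and> L < r^4 \<and> r^4 < R"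
proof -
  define al where "al = root 4 (real_of_rat L)"
  define be where "be = root 4 (real_of_rat R)"
  have al0: "0 < al" using L by (simp add: al_def)
  have albe: "al < be" using L LR by (simp add: al_def be_def of_rat_less)
  obtain N :: nat where N: "2^\<sigma> / (be - al) < real N" using reals_Archimedean2 by blast
  define q :: int where "q = 2 * int N + 1"
  have q0: "q > 0" by (simp add: q_def)
  have qodd: "\<not> 2 dvd q" by (simp add: q_def)
  have qbig: "2^\<sigma> / real_of_int q < be - al"
  proof -
    have "2^\<sigma> / (be - al) < real_of_int q" using N by (simp add: q_def)
    hence "2^\<sigma> < real_of_int q * (be - al)" using albe by (simp add: divide_less_eq mult.commute)
    thus ?thesis using q0 by (simp add: divide_less_eq mult.commute)
  qed
  define p :: int where "p = \<lfloor>al * real_of_int q / 2^\<sigma>\<rfloor> + 1"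
  have p1: "al * real_of_int q / 2^\<sigma> < real_of_int p" unfolding p_def by linarith
  have p2: "real_of_int p \<le> al * real_of_int q / 2^\<sigma> + 1" unfolding p_def by linarith
  have p0: "p > 0"
  proof -
    have "0 < al * real_of_int q / 2^\<sigma>" using al0 q0 by simp
    thus ?thesis using p1 by linarith
  qed
  define r :: rat where "r = of_int (2^\<sigma> * p) / of_int q"
  have rr: "real_of_rat r = 2^\<sigma> * real_of_int p / real_of_int q"
    by (simp add: r_def of_rat_divide of_rat_mult of_rat_power)
  have lo: "al < real_of_rat r"
  proof -
    have "al * real_of_int q < 2^\<sigma> * real_of_int p" using p1 by (simp add: divide_less_eq mult.commute)
    thus ?thesis unfolding rr using q0 by (simp add: less_divide_eq)
  qed
  have hi: "real_of_rat r < be"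
  proof -
    have "2^\<sigma> * real_of_int p \<le> al * real_of_int q + 2^\<sigma>" using p2 by (simp add: field_simps)
    hence "real_of_rat r \<le> (al * real_of_int q + 2^\<sigma>) / real_of_int q" unfolding rr
      by (rule divide_right_mono) (use q0 in auto)
    also have "\<dots> = al + 2^\<sigma> / real_of_int q" using q0 by (simp add: field_simps)
    finally have "real_of_rat r \<le> al + 2^\<sigma> / real_of_int q" .
    thus ?thesis using qbig by linarith
  qed
  have r0: "0 < real_of_rat r" using lo al0 by linarith
  have "al^4 < (real_of_rat r)^4" by (rule power_strict_mono) (use lo al0 in auto)
  moreover have "(real_of_rat r)^4 < be^4" by (rule power_strict_mono) (use hi r0 in auto)
  moreover have "al^4 = real_of_rat L" using L by (simp add: al_def real_root_pow_pos)
  moreover have "be^4 = real_of_rat R" using L LR by (simp add: be_def real_root_pow_pos)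
  ultimately have "real_of_rat L < real_of_rat (r^4)" "real_of_rat (r^4) < real_of_rat R"
    by (simp_all add: of_rat_power)
  hence ineq: "L < r^4" "r^4 < R" by (simp_all add: of_rat_less)
  have rnz: "r \<noteq> 0" using r0 by auto
  have "v2 r = int (multiplicity 2 (2^\<sigma> * p)) - int (multiplicity 2 q)"
    unfolding r_def by (rule v2_frac) (use p0 q0 in auto)
  also have "\<dots> = int \<sigma> + int (multiplicity 2 p)"
    using p0 qodd by (simp add: mult2_mult not_dvd_imp_multiplicity_0)
  finally have "int \<sigma> \<le> v2 r" by simp
  thus ?thesis using rnz ineq by blast
qed

lemma dens_K:
  fixes K u v :: rat and \<sigma> :: nat
  assumes K: "0 < K" and u: "0 \<le> u" and uv: "u < v"
  shows "\<exists>r. r \<noteq> 0 \<and> int \<sigma> \<le> v2 r \<and> u < K / r^4 \<and> K / r^4 < v"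
proof -
  define lo where "lo = (u + v) / 2"
  have lo: "u < lo" "lo < v" "0 < lo" using u uv by (auto simp: lo_def)
  have "0 < K / v" "K / v < K / lo" using K lo by (auto simp: divide_strict_left_mono)
  then obtain r where r: "r \<noteq> 0" "int \<sigma> \<le> v2 r" "K / v < r^4" "r^4 < K / lo"
    using dense_r[of "K/v" "K/lo" \<sigma>] by blast
  have r4: "0 < r^4" using r(1) by simp
  have "K < v * r^4" using r(3) lo by (simp add: divide_less_eq mult.commute)
  hence a: "K / r^4 < v" using r4 by (simp add: divide_less_eq)
  have "lo * r^4 < K" using r(4) lo by (simp add: less_divide_eq mult.commute)
  hence b: "lo < K / r^4" using r4 by (simp add: less_divide_eq)
  show ?thesis using r a b lo by (intro exI[of _ r]) auto
qed

lemma good_point: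
  fixes a c d r :: rat and \<sigma> :: nat
  assumes a: "a \<noteq> 0" and c: "c \<noteq> 0" and d: "d \<noteq> 0" and r: "r \<noteq> 0"
    and \<sigma>: "\<sigma> = nat (\<bar>v2 a\<bar> + \<bar>v2 c\<bar> + \<bar>v2 d\<bar> + 1)" and rs: "int \<sigma> \<le> v2 r"
  defines "t \<equiv> (a / r^4 - d) / c"
  shows "t^4 + c*t + d \<noteq> 0 \<and> positive_rank (t^4 + c*t + d) a 0"
proof -
  define \<rho> where "\<rho> = v2 r"
  define m where "m = t * r"
  have rs': "\<bar>v2 a\<bar> + \<bar>v2 c\<bar> + \<bar>v2 d\<bar> + 1 \<le> \<rho>" using rs \<sigma> by (simp add: \<rho>_def)
  have ab: "v2 a \<le> \<bar>v2 a\<bar>" "- v2 a \<le> \<bar>v2 a\<bar>" "v2 c \<le> \<bar>v2 c\<bar>" "- v2 c \<le> \<bar>v2 c\<bar>"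
     "v2 d \<le> \<bar>v2 d\<bar>" "- v2 d \<le> \<bar>v2 d\<bar>" by auto
  have ct: "c*t + d = a / r^4" using c by (simp add: t_def field_simps)
  have mc: "m * c = a / r^3 + (- (d * r))" using c r
    by (simp add: m_def t_def field_simps power2_eq_square power3_eq_cube power4_eq_xxxx)
  have ar: "a / r^3 \<noteq> 0" using a r by simp
  have va: "v2 (a / r^3) = v2 a - 3*\<rho>" using a r by (simp add: v2_divide v2_power \<rho>_def)
  have vd: "v2 (- (d * r)) = v2 d + \<rho>" using d r by (simp add: v2_mult \<rho>_def)
  have "v2 (a / r^3) + 1 \<le> v2 (- (d * r))" unfolding vd va using rs' ab by linarith
  hence "vge (- (d * r)) (v2 (a / r^3) + 1)" by (simp add: vge_def)
  from v2_strict[OF ar this] have s: "m * c \<noteq> 0" "v2 (m * c) = v2 a - 3*\<rho>"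
    using mc va by auto
  have m0: "m \<noteq> 0" using s by auto
  have vm: "v2 m = v2 a - 3*\<rho> - v2 c" using s m0 c by (simp add: v2_mult)
  have vm4: "4 * v2 m < v2 a" unfolding vm using rs' ab by (simp add: algebra_simps)
  have t0: "t \<noteq> 0" using m0 by (simp add: m_def)
  define k where "k = t^4 + c*t + d"
  have kk: "k = t^4 + a / r^4" using ct by (simp add: k_def add.assoc)
  have k1: "k = (m^4 + a) / r^4" unfolding kk using r by (simp add: m_def power_mult_distrib field_simps)
  have m4: "m^4 \<noteq> 0" using m0 by simp
  have "vge a (v2 (m^4) + 1)" using vm4 by (simp add: vge_def v2_power)
  hence ma: "m^4 + a \<noteq> 0" using v2_strict[OF m4] by simp
  have k0: "k \<noteq> 0" using ma r by (simp add: k1)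
  define x where "x = t^2 * r^2"
  define y where "y = t * r^3"
  have cur: "k * y^2 = x^3 + a*x"
  proof -
    have kr: "k * r^4 = a + r^4 * t^4" using kk r by (simp add: field_simps)
    have "k * y^2 = (k*r^4)*(t^2*r^2)" unfolding y_def by algebra
    also have "\<dots> = x^3 + a*x" unfolding kr x_def by algebra
    finally show ?thesis .
  qed
  define \<alpha> where "\<alpha> = k * r^4"
  define \<beta> where "\<beta> = k^2 * r^6"
  have a0: "\<alpha> \<noteq> 0" using k0 r by (simp add: \<alpha>_def)
  have b0: "\<beta> \<noteq> 0" using k0 r by (simp add: \<beta>_def)
  have rel: "\<beta>^2 = k * \<alpha>^3" unfolding \<alpha>_def \<beta>_def by algebra
  define A where "A = a * \<alpha>^2"
  have A0: "A \<noteq> 0" using a a0 by (simp add: A_def)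
  have cur2: "(\<beta>*y)^2 = (\<alpha>*x)^3 + A*(\<alpha>*x)"
  proof -
    have "(\<beta>*y)^2 = \<alpha>^3 * (k * y^2)" using rel by (simp add: power_mult_distrib)
    also have "\<dots> = (\<alpha>*x)^3 + A*(\<alpha>*x)" unfolding cur by (simp add: A_def algebra_simps power2_eq_square power3_eq_cube)
    finally show ?thesis .
  qed
  have x0: "\<alpha>*x \<noteq> 0" using a0 t0 r by (simp add: x_def)
  have "\<alpha>*x = \<alpha> * m^2" by (simp add: x_def m_def power_mult_distrib)
  hence vx: "v2 (\<alpha>*x) = v2 \<alpha> + 2 * v2 m" using a0 m0 by (simp add: v2_mult v2_power)
  have vA: "v2 A = v2 a + 2 * v2 \<alpha>" using a a0 by (simp add: A_def v2_mult v2_power)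
  have h: "2 * v2 (\<alpha>*x) < v2 A" using vx vA vm4 by simp
  have C: "\<forall>n>0. ec_mult 1 A 0 n (Pt (\<alpha>*x) (\<beta>*y)) \<noteq> Infty" using core[OF A0 cur2 x0 h] .
  have "\<forall>n>0. ec_mult k a 0 n (Pt x y) \<noteq> Infty"
  proof (intro allI impI)
    fix n :: nat assume n: "0 < n"
    have "psi \<alpha> \<beta> (ec_mult k a 0 n (Pt x y)) = ec_mult 1 A 0 n (Pt (\<alpha>*x) (\<beta>*y))"
      using psi_mult[OF a0 b0 rel, of a n "Pt x y"] by (simp add: A_def)
    thus "ec_mult k a 0 n (Pt x y) \<noteq> Infty" using C n by (metis psi.simps(1))
  qed
  moreover have "on_curve k a 0 (Pt x y)" using cur by (simp add: on_curve_def)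
  ultimately have "positive_rank k a 0" unfolding positive_rank_def by blast
  thus ?thesis using k0 by (simp add: k_def)
qed

theorem corollary4p3:
  fixes a c d :: rat
  assumes "a \<noteq> 0" "c \<noteq> 0" "d \<noteq> 0"
  defines "f \<equiv> (\<lambda>t::rat. t^4 + c * t + d)"
  shows "\<exists>W :: rat set.
           (\<forall>t\<in>W. f t \<noteq> 0 \<and> positive_rank (f t) a 0) \<and>
           (a * c > 0 \<longrightarrow> (\<forall>u v. - d / c \<le> u \<and> u < v \<longrightarrow> (\<exists>w\<in>W. u < w \<and> w < v))) \<and>
           (a * c < 0 \<longrightarrow> (\<forall>u v. u < v \<and> v \<le> - d / c \<longrightarrow> (\<exists>w\<in>W. u < w \<and> w < v)))"
proof -
  define \<sigma> where "\<sigma> = nat (\<bar>v2 a\<bar> + \<bar>v2 c\<bar> + \<bar>v2 d\<bar> + 1)"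
  define W where "W = {(a / r^4 - d) / c | r. r \<noteq> 0 \<and> int \<sigma> \<le> v2 r}"
  have g: "\<forall>t\<in>W. f t \<noteq> 0 \<and> positive_rank (f t) a 0"
  proof
    fix t assume "t \<in> W"
    then obtain r where r: "r \<noteq> 0" "int \<sigma> \<le> v2 r" "t = (a / r^4 - d) / c" by (auto simp: W_def)
    show "f t \<noteq> 0 \<and> positive_rank (f t) a 0"
      using good_point[OF assms(1-3) r(1) \<sigma>_def r(2)] r(3) by (simp add: f_def)
  qed
  have wr: "(a / r^4 - d) / c = (a/c) / r^4 - d/c" for r using assms(2) by (simp add: field_simps)
  have d1: "a * c > 0 \<longrightarrow> (\<forall>u v. - d / c \<le> u \<and> u < v \<longrightarrow> (\<exists>w\<in>W. u < w \<and> w < v))"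
  proof (intro impI allI)
    fix u v assume ac: "a * c > 0" and uv: "- d / c \<le> u \<and> u < v"
    have K: "0 < a / c" using ac by (simp add: zero_less_divide_iff zero_less_mult_iff)
    obtain r where r: "r \<noteq> 0" "int \<sigma> \<le> v2 r" "u + d/c < (a/c) / r^4" "(a/c) / r^4 < v + d/c"
      using dens_K[OF K, of "u + d/c" "v + d/c" \<sigma>] uv by auto
    have "(a / r^4 - d) / c \<in> W" using r by (auto simp: W_def)
    moreover have "u < (a / r^4 - d) / c" "(a / r^4 - d) / c < v" unfolding wr using r by auto
    ultimately show "\<exists>w\<in>W. u < w \<and> w < v" by blast
  qed
  have d2: "a * c < 0 \<longrightarrow> (\<forall>u v. u < v \<and> v \<le> - d / c \<longrightarrow> (\<exists>w\<in>W. u < w \<and> w < v))"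
  proof (intro impI allI)
    fix u v assume ac: "a * c < 0" and uv: "u < v \<and> v \<le> - d / c"
    have K: "0 < - (a / c)" using ac by (simp add: divide_less_0_iff mult_less_0_iff)
    obtain r where r: "r \<noteq> 0" "int \<sigma> \<le> v2 r" "- v - d/c < (- (a/c)) / r^4" "(- (a/c)) / r^4 < - u - d/c"
      using dens_K[OF K, of "- v - d/c" "- u - d/c" \<sigma>] uv by auto
    have "(a / r^4 - d) / c \<in> W" using r by (auto simp: W_def)
    moreover have "u < (a / r^4 - d) / c" "(a / r^4 - d) / c < v" unfolding wr using r by auto
    ultimately show "\<exists>w\<in>W. u < w \<and> w < v" by blast
  qed
  show ?thesis using g d1 d2 by blast
qed

end
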